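(* Assume that $\gamma(s)>0$ for every $s\in S$. Fix a stationary policy $f$ and a cost vector $c\in\mathbb{R}^{|\mathcal{K}|}$. Consider the problem $$(\mathrm{I})\qquad \max_{\mathfrak{u}\in\mathfrak{U}}\ (1-\alpha)\,\gamma^T\big(I-\alpha P_f(\mathfrak{u})\big)^{-1}c_f,$$ and the second-order cone program $$(\mathrm{II})\qquad \max_{\mathfrak{w}_c,\ \mathfrak{z}_c}\ \mathfrak{w}_c^T c_f$$ subject to, for all $s\in S$, $$B(s)\,z_c(\cdot\mid s,\cdot)-b(s)\,w_c(s)\le 0,$$ $$\big\|M(s)^T z_c(\cdot\mid s,\cdot)+m(s)\,w_c(s)\big\|_2\le x(s)^T z_c(\cdot\mid s,\cdot)+y(s)\,w_c(s),$$ and $$\mathfrak{w}_c\ge(1-\alpha)\gamma,\qquad \mathfrak{w}_c^T(I-\alpha\bar P_f)-\alpha\sum_{s\in S} z_c(\cdot\mid s,\cdot)^T F_f(s)=(1-\alpha)\gamma^T,$$ where $\mathfrak{w}_c=(w_c(s))_{s\in S}\in\mathbb{R}^{|S|}$ and $\mathfrak{z}_c=(z_c(s'\mid s,a))_{(s,a,s')\in\mathcal{H}}$ with $z_c(\cdot\mid s,\cdot)=(z_c(s'\mid s,a))_{(a,s')\in A(s)\times S}\in\mathbb{R}^{|A(s)||S|}$. Then problems (I) and (II) are equivalent. That is, for every feasible $\mathfrak{u}$ of (I) there is a feasible $(\mathfrak{w}_c,\mathfrak{z}_c)$ of (II) with the same objective value, and conversely. In particular, their optimal values coincide.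
   Context: Setting. Let $S$ be a finite nonempty set of states. For each $s\in S$, let $A(s)$ be a finite nonempty set of actions. Put $\mathcal{K}=\{(s,a): s\in S,\ a\in A(s)\}$ and $\mathcal{H}=\{(s,a,s'): (s,a)\in\mathcal{K},\ s'\in S\}$. Let $\alpha\in(0,1)$ be a discount factor, and let $\gamma=(\gamma(s))_{s\in S}$ be a probability distribution on $S$ (the initial distribution). Let $\bar p(s'\mid s,a)\ge 0$, for $(s,a,s')\in\mathcal{H}$, be observed transition probabilities with $\sum_{s'\in S}\bar p(s'\mid s,a)=1$. Uncertainty. The true transition probabilities are $p(s'\mid s,a)=\bar p(s'\mid s,a)+u(s'\mid s,a)$, where the uncertain vector is $\mathfrak{u}=(u(s'\mid s,a))_{(s,a,s')\in\mathcal{H}}$. For $s\in S$, write $u(\cdot\mid s,\cdot)=(u(s'\mid s,a))_{(a,s')\in A(s)\times S}\in\mathbb{R}^{|A(s)||S|}$. The uncertainty set is $$\mathfrak{U}=\Big\{\mathfrak{u} : B(s)u(\cdot\mid s,\cdot)-b(s)\le 0,\ \|M(s)^Tu(\cdot\mid s,\cdot)+m(s)\|_2\le x(s)^Tu(\cdot\mid s,\cdot)+y(s)\ \ \forall s\in S\Big\}.$$ Here $B(s)\in\mathbb{R}^{\ell_p(s)\times|A(s)||S|}$, $b(s)\in\mathbb{R}^{\ell_p(s)}$, $M(s)\in\mathbb{R}^{|A(s)||S|\times \ell_{sc}(s)}$, $m(s)\in\mathbb{R}^{\ell_{sc}(s)}$, $x(s)\in\mathbb{R}^{|A(s)||S|}$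 and $y(s)\in\mathbb{R}$. The polyhedral constraints $B(s)u(\cdot\mid s,\cdot)\le b(s)$ include the conditions $\underline u(s'\mid s,a)\le u(s'\mid s,a)\le \bar u(s'\mid s,a)$ and $\sum_{s'\in S}u(s'\mid s,a)=0$ for all $(s,a,s')\in\mathcal{H}$. The bounds are such that $\bar p+\mathfrak{u}$ remains a vector of transition probabilities. Policies and matrices. A stationary policy is $f=(f(s,a))_{(s,a)\in\mathcal{K}}$ with $f(s,a)\ge0$ and $\sum_{a\in A(s)}f(s,a)=1$ for each $s$. - $P_f(\mathfrak{u})$ is the $|S|\times|S|$ matrix with $(s,s')$ entry $\sum_{a\in A(s)}f(s,a)\big(\bar p(s'\mid s,a)+u(s'\mid s,a)\big)$. - $\bar P_f$ is the $|S|\times|S|$ matrix with $(s,s')$ entry $\sum_{a\in A(s)}f(s,a)\bar p(s'\mid s,a)$. - For a cost vector $c=(c(s,a))_{(s,a)\in\mathcal{K}}$, $c_f\in\mathbb{R}^{|S|}$ has entries $c_f(s)=\sum_{a\in A(s)}f(s,a)c(s,a)$. - $F_f(s)$ is the $(|A(s)||S|)\times|S|$ matrix such that $v^T F_f(s)e_{s'}=\sum_{a\in A(s)}f(s,a)\,v(s'\mid s,a)$ for every $v=(v(s'\mid s,a))_{(a,s')\in A(s)\times S}$. - $e_{s}$ denotes the $s$-th standard unit vector in $\mathbb{R}^{|S|}$, and $I$ is the $|S|\times|S|$ identity matrix. *)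

theory Defs
  imports "HOL-Analysis.Analysis"
begin

text \<open>A vector v(.|s,.) in R^{|A(s)||S|} is represented as a function of (a,s') on A s \<times> UNIV.
 A matrix with rows indexed by i < l is a function i \<mapsto> (a,s') \<mapsto> entry.
 Uncertain vector u and the variable z are functions s \<mapsto> a \<mapsto> s' \<mapsto> value.\<close>

definition lin :: "('s::finite \<Rightarrow> 'act set) \<Rightarrow> 's \<Rightarrow> ('act \<times> 's \<Rightarrow> real) \<Rightarrow> ('act \<times> 's \<Rightarrow> real) \<Rightarrow> real" where
  "lin A s r v = (\<Sum>p\<in>A s \<times> UNIV. r p * v p)"

definition in_U ::
  "('s::finite \<Rightarrow> 'act set) \<Rightarrow> ('s \<Rightarrow> nat) \<Rightarrow> ('s \<Rightarrow> nat \<Rightarrow> 'act \<times> 's \<Rightarrow> real) \<Rightarrow> ('s \<Rightarrow> nat \<Rightarrow> real)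
   \<Rightarrow> ('s \<Rightarrow> nat) \<Rightarrow> ('s \<Rightarrow> 'act \<times> 's \<Rightarrow> nat \<Rightarrow> real) \<Rightarrow> ('s \<Rightarrow> nat \<Rightarrow> real)
   \<Rightarrow> ('s \<Rightarrow> 'act \<times> 's \<Rightarrow> real) \<Rightarrow> ('s \<Rightarrow> real) \<Rightarrow> ('s \<Rightarrow> 'act \<Rightarrow> 's \<Rightarrow> real) \<Rightarrow> bool" where
  "in_U A lp B b lsc M m x y u \<longleftrightarrow>
     (\<forall>s. (\<forall>i<lp s. lin A s (B s i) (\<lambda>(a,s'). u s a s') - b s i \<le> 0) \<and>
          sqrt (\<Sum>j<lsc s. (lin A s (\<lambda>p. M s p j) (\<lambda>(a,s'). u s a s') + m s j)\<^sup>2)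
            \<le> lin A s (x s) (\<lambda>(a,s'). u s a s') + y s)"

text \<open>P_f(u) (with u = 0 this is \<open>P\<close>-bar_f).\<close>
definition Pf :: "('s::finite \<Rightarrow> 'act set) \<Rightarrow> ('s \<Rightarrow> 'act \<Rightarrow> real) \<Rightarrow> ('s \<Rightarrow> 'act \<Rightarrow> 's \<Rightarrow> real)
    \<Rightarrow> ('s \<Rightarrow> 'act \<Rightarrow> 's \<Rightarrow> real) \<Rightarrow> real^'s^'s" where
  "Pf A f pbar u = (\<chi> s s'. \<Sum>a\<in>A s. f s a * (pbar s a s' + u s a s'))"

definition cf :: "('s::finite \<Rightarrow> 'act set) \<Rightarrow> ('s \<Rightarrow> 'act \<Rightarrow> real) \<Rightarrow> ('s \<Rightarrow> 'act \<Rightarrow> real) \<Rightarrow> real^'s" where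
  "cf A f c = (\<chi> s. \<Sum>a\<in>A s. f s a * c s a)"

definition objI :: "('s::finite \<Rightarrow> 'act set) \<Rightarrow> real \<Rightarrow> real^'s \<Rightarrow> ('s \<Rightarrow> 'act \<Rightarrow> real) \<Rightarrow> ('s \<Rightarrow> 'act \<Rightarrow> 's \<Rightarrow> real)
    \<Rightarrow> ('s \<Rightarrow> 'act \<Rightarrow> real) \<Rightarrow> ('s \<Rightarrow> 'act \<Rightarrow> 's \<Rightarrow> real) \<Rightarrow> real" where
  "objI A \<alpha> \<gamma> f pbar c u = (1 - \<alpha>) * (\<gamma> \<bullet> (matrix_inv (mat 1 - \<alpha> *\<^sub>R Pf A f pbar u) *v cf A f c))"

definition feasII ::
  "('s::finite \<Rightarrow> 'act set) \<Rightarrow> real \<Rightarrow> real^'s \<Rightarrow> ('s \<Rightarrow> 'act \<Rightarrow> real) \<Rightarrow> ('s \<Rightarrow> 'act \<Rightarrow> 's \<Rightarrow> real)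
   \<Rightarrow> ('s \<Rightarrow> nat) \<Rightarrow> ('s \<Rightarrow> nat \<Rightarrow> 'act \<times> 's \<Rightarrow> real) \<Rightarrow> ('s \<Rightarrow> nat \<Rightarrow> real)
   \<Rightarrow> ('s \<Rightarrow> nat) \<Rightarrow> ('s \<Rightarrow> 'act \<times> 's \<Rightarrow> nat \<Rightarrow> real) \<Rightarrow> ('s \<Rightarrow> nat \<Rightarrow> real)
   \<Rightarrow> ('s \<Rightarrow> 'act \<times> 's \<Rightarrow> real) \<Rightarrow> ('s \<Rightarrow> real)
   \<Rightarrow> real^'s \<Rightarrow> ('s \<Rightarrow> 'act \<Rightarrow> 's \<Rightarrow> real) \<Rightarrow> bool" where
  "feasII A \<alpha> \<gamma> f pbar lp B b lsc M m x y w z \<longleftrightarrow>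
     (\<forall>s. (\<forall>i<lp s. lin A s (B s i) (\<lambda>(a,s'). z s a s') - b s i * w $ s \<le> 0) \<and>
          sqrt (\<Sum>j<lsc s. (lin A s (\<lambda>p. M s p j) (\<lambda>(a,s'). z s a s') + m s j * w $ s)\<^sup>2)
            \<le> lin A s (x s) (\<lambda>(a,s'). z s a s') + y s * w $ s) \<and>
     (\<forall>s. w $ s \<ge> (1 - \<alpha>) * \<gamma> $ s) \<and>
     (\<forall>s'. w $ s' - \<alpha> * (\<Sum>s\<in>UNIV. w $ s * Pf A f pbar (\<lambda>_ _ _. 0) $ s $ s')
            - \<alpha> * (\<Sum>s\<in>UNIV. \<Sum>a\<in>A s. f s a * z s a s') = (1 - \<alpha>) * \<gamma> $ s')"

definition objII :: "('s::finite \<Rightarrow> 'act set) \<Rightarrow> ('s \<Rightarrow> 'act \<Rightarrow> real) \<Rightarrow> ('s \<Rightarrow> 'act \<Rightarrow> real) \<Rightarrow> real^'s \<Rightarrow> real" where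
  "objII A f c w = w \<bullet> cf A f c"

end

theory Submission imports Defs begin

lemma lin_scale:
  "lin A s r (\<lambda>(a,s'). k * u a s') = k * lin A s r (\<lambda>(a,s'). u a s')"
  unfolding lin_def by (simp add: sum_distrib_left case_prod_beta algebra_simps)

lemma soc_scale:
  fixes k :: real assumes k: "k > 0"
  shows "sqrt (\<Sum>j<n. (lin A s (\<lambda>p. M p j) (\<lambda>(a,s'). k * u a s') + m j * k)\<^sup>2)
            \<le> lin A s x (\<lambda>(a,s'). k * u a s') + y * k
     \<longleftrightarrow> sqrt (\<Sum>j<n. (lin A s (\<lambda>p. M p j) (\<lambda>(a,s'). u a s') + m j)\<^sup>2)
            \<le> lin A s x (\<lambda>(a,s'). u a s') + y"
proof -
  have "(\<Sum>j<n. (lin A s (\<lambda>p. M p j) (\<lambda>(a,s'). k * u a s') + m j * k)\<^sup>2)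
     = k^2 * (\<Sum>j<n. (lin A s (\<lambda>p. M p j) (\<lambda>(a,s'). u a s') + m j)\<^sup>2)"
  proof -
    have sq: "\<And>L mm. (k*L + mm*k)^2 = k^2*(L+mm)^2" by (simp add: power2_eq_square algebra_simps)
    show ?thesis by (simp only: lin_scale sq sum_distrib_left)
  qed
  then have e1: "sqrt (\<Sum>j<n. (lin A s (\<lambda>p. M p j) (\<lambda>(a,s'). k * u a s') + m j * k)\<^sup>2)
     = k * sqrt (\<Sum>j<n. (lin A s (\<lambda>p. M p j) (\<lambda>(a,s'). u a s') + m j)\<^sup>2)"
    using k by (simp add: real_sqrt_mult)
  have e2: "lin A s x (\<lambda>(a,s'). k * u a s') + y * k = k * (lin A s x (\<lambda>(a,s'). u a s') + y)"
    by (simp only: lin_scale distrib_left mult.commute)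
  show ?thesis unfolding e1 e2 using k by (rule mult_le_cancel_left_pos)
qed

lemma poly_scale:
  fixes k :: real assumes k: "k > 0"
  shows "(lin A s r (\<lambda>(a,s'). k * u a s') - b * k \<le> 0) \<longleftrightarrow> (lin A s r (\<lambda>(a,s'). u a s') - b \<le> 0)"
proof -
  have "lin A s r (\<lambda>(a,s'). k * u a s') - b * k = k * (lin A s r (\<lambda>(a,s'). u a s') - b)"
    by (simp add: lin_scale algebra_simps)
  thus ?thesis using k by (simp add: mult_le_0_iff)
qed

lemma mv_gen:
  fixes v :: "real^'n::finite" and Q :: "real^'n^'n"
  shows "((mat 1 - \<alpha> *\<^sub>R Q) *v v)$i = v$i - \<alpha> * (\<Sum>j\<in>UNIV. Q$i$j * v$j)"
proof -
  have "((mat 1 - \<alpha> *\<^sub>R Q) *v v)$i = (\<Sum>j\<in>UNIV. ((mat 1::real^'n^'n)$i$j - \<alpha> * Q$i$j) * v$j)"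
    by (simp add: matrix_vector_mult_def)
  also have "\<dots> = (\<Sum>j\<in>UNIV. (mat 1::real^'n^'n)$i$j * v$j - \<alpha> * (Q$i$j * v$j))"
    by (rule sum.cong) (simp_all add: left_diff_distrib)
  also have "\<dots> = (\<Sum>j\<in>UNIV. (mat 1::real^'n^'n)$i$j * v$j) - \<alpha> * (\<Sum>j\<in>UNIV. Q$i$j * v$j)"
    by (simp only: sum_subtractf sum_distrib_left)
  also have "(\<Sum>j\<in>UNIV. (mat 1::real^'n^'n)$i$j * v$j) = v$i"
  proof -
    have "(mat 1::real^'n^'n)$i$j * v$j = (if i = j then v$j else 0)" for j by (simp add: mat_def)
    then show ?thesis by simp
  qed
  finally show ?thesis .
qed

locale stoch =
  fixes P :: "real^'n::finite^'n" and \<alpha> :: real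
  assumes nn: "\<And>i j. P$i$j \<ge> 0" and rows: "\<And>i. (\<Sum>j\<in>UNIV. P$i$j) = 1"
    and a0: "0 < \<alpha>" and a1: "\<alpha> < 1"
begin

lemma pos:
  assumes h: "\<And>i. ((mat 1 - \<alpha> *\<^sub>R P) *v v)$i \<ge> 0"
  shows "v$i \<ge> 0"
proof -
  define mn where "mn = Min (range (\<lambda>i. v$i))"
  obtain i0 where i0: "v$i0 = mn"
  proof -
    have "Min (range (\<lambda>i. v$i)) \<in> range (\<lambda>i. v$i)" by (rule Min_in) simp_all
    then obtain j where "Min (range (\<lambda>i. v$i)) = v$j" by blast
    then show ?thesis using that unfolding mn_def by simp
  qed
  have le: "mn \<le> v$j" for j unfolding mn_def by simp
  have "(\<Sum>j\<in>UNIV. P$i0$j * mn) \<le> (\<Sum>j\<in>UNIV. P$i0$j * v$j)"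
    by (rule sum_mono) (simp add: le nn mult_left_mono)
  then have Pv: "mn \<le> (\<Sum>j\<in>UNIV. P$i0$j * v$j)"
    by (simp add: sum_distrib_right[symmetric] rows)
  have "((mat 1 - \<alpha> *\<^sub>R P) *v v)$i0 = v$i0 - \<alpha> * (\<Sum>j\<in>UNIV. P$i0$j * v$j)"
    by (rule mv_gen)
  with h[of i0] i0 have "\<alpha> * (\<Sum>j\<in>UNIV. P$i0$j * v$j) \<le> mn" by simp
  moreover have "\<alpha> * mn \<le> \<alpha> * (\<Sum>j\<in>UNIV. P$i0$j * v$j)" using Pv a0 by simp
  ultimately have "(1 - \<alpha>) * mn \<ge> 0" by (simp add: algebra_simps)
  then have "mn \<ge> 0" using a1 by (simp add: zero_le_mult_iff)
  then show ?thesis using le[of i] by simp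
qed

lemma inv: "invertible (mat 1 - \<alpha> *\<^sub>R P)"
proof -
  have "\<forall>v. (mat 1 - \<alpha> *\<^sub>R P) *v v = 0 \<longrightarrow> v = 0"
  proof (intro allI impI)
    fix v assume z: "(mat 1 - \<alpha> *\<^sub>R P) *v v = 0"
    have neg: "(mat 1 - \<alpha> *\<^sub>R P) *v (-v) = - ((mat 1 - \<alpha> *\<^sub>R P) *v v)"
      using matrix_vector_mult_diff_distrib[of "mat 1 - \<alpha> *\<^sub>R P" 0 v] by simp
    have a: "v$i \<ge> 0" for i by (rule pos) (simp add: z)
    have b: "(-v)$i \<ge> 0" for i by (rule pos) (simp add: neg z)
    show "v = 0" unfolding vec_eq_iff
    proof
      fix i show "v$i = 0$i" using a[of i] b[of i] by simp
    qed
  qed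
  then have "\<exists>B'. B' ** (mat 1 - \<alpha> *\<^sub>R P) = mat 1" by (simp only: matrix_left_invertible_ker)
  then show ?thesis by (simp only: invertible_left_inverse)
qed

lemma inv_eqs: "(mat 1 - \<alpha> *\<^sub>R P) ** matrix_inv (mat 1 - \<alpha> *\<^sub>R P) = mat 1"
   "matrix_inv (mat 1 - \<alpha> *\<^sub>R P) ** (mat 1 - \<alpha> *\<^sub>R P) = mat 1"
proof -
  from inv obtain A' where "(mat 1 - \<alpha> *\<^sub>R P) ** A' = mat 1 \<and> A' ** (mat 1 - \<alpha> *\<^sub>R P) = mat 1"
    unfolding invertible_def by blast
  then have "(mat 1 - \<alpha> *\<^sub>R P) ** matrix_inv (mat 1 - \<alpha> *\<^sub>R P) = mat 1 \<and>
     matrix_inv (mat 1 - \<alpha> *\<^sub>R P) ** (mat 1 - \<alpha> *\<^sub>R P) = mat 1"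
    unfolding matrix_inv_def by (rule someI)
  then show "(mat 1 - \<alpha> *\<^sub>R P) ** matrix_inv (mat 1 - \<alpha> *\<^sub>R P) = mat 1"
   "matrix_inv (mat 1 - \<alpha> *\<^sub>R P) ** (mat 1 - \<alpha> *\<^sub>R P) = mat 1" by simp_all
qed

lemma inv_pos:
  assumes "\<And>i. h$i \<ge> 0" shows "(matrix_inv (mat 1 - \<alpha> *\<^sub>R P) *v h)$i \<ge> 0"
  by (rule pos) (simp add: matrix_vector_mul_assoc inv_eqs assms)

end

lemma vm_gen:
  fixes w :: "real^'n::finite" and Q :: "real^'n^'n"
  shows "(w v* (mat 1 - \<alpha> *\<^sub>R Q))$t = w$t - \<alpha> * (\<Sum>s\<in>UNIV. w$s * Q$s$t)"
proof -
  have "(w v* (mat 1 - \<alpha> *\<^sub>R Q))$t = (\<Sum>i\<in>UNIV. (mat 1::real^'n^'n)$i$t * w$i) - \<alpha> * (\<Sum>i\<in>UNIV. w$i * Q$i$t)"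
  proof -
    have "(w v* (mat 1 - \<alpha> *\<^sub>R Q))$t = (\<Sum>i\<in>UNIV. ((mat 1::real^'n^'n)$i$t - \<alpha> * Q$i$t) * w$i)"
      by (simp add: vector_matrix_mult_def mult.commute)
    also have "\<dots> = (\<Sum>i\<in>UNIV. (mat 1::real^'n^'n)$i$t * w$i - \<alpha> * (w$i * Q$i$t))"
      by (rule sum.cong) (simp_all add: left_diff_distrib)
    also have "\<dots> = (\<Sum>i\<in>UNIV. (mat 1::real^'n^'n)$i$t * w$i) - \<alpha> * (\<Sum>i\<in>UNIV. w$i * Q$i$t)"
      by (simp only: sum_subtractf sum_distrib_left)
    finally show ?thesis .
  qed
  also have "(\<Sum>i\<in>UNIV. (mat 1::real^'n^'n)$i$t * w$i) = w$t"
  proof -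
    have "(mat 1::real^'n^'n)$i$t * w$i = (if i = t then w$i else 0)" for i by (simp add: mat_def)
    then show ?thesis by simp
  qed
  finally show ?thesis .
qed

lemma Pf_split: "Pf A f pbar u $ s $ t = Pf A f pbar (\<lambda>_ _ _. 0) $ s $ t + (\<Sum>a\<in>A s. f s a * u s a t)"
  by (simp add: Pf_def distrib_left sum.distrib)

lemma eqn: "(w v* (mat 1 - \<alpha> *\<^sub>R Pf A f pbar u))$t
   = w$t - \<alpha> * (\<Sum>s\<in>UNIV. w$s * Pf A f pbar (\<lambda>_ _ _. 0) $ s $ t)
     - \<alpha> * (\<Sum>s\<in>UNIV. \<Sum>a\<in>A s. f s a * (w$s * u s a t))"
proof -
  have "(\<Sum>s\<in>UNIV. w$s * Pf A f pbar u $s$t) = (\<Sum>s\<in>UNIV. w$s * Pf A f pbar (\<lambda>_ _ _. 0) $ s $ t)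
     + (\<Sum>s\<in>UNIV. \<Sum>a\<in>A s. f s a * (w$s * u s a t))"
    by (simp add: Pf_def distrib_left sum.distrib sum_distrib_left mult.left_commute)
  then show ?thesis by (simp only: vm_gen distrib_left diff_diff_eq)
qed

lemma constr_iff:
  assumes "\<And>s. w$s > (0::real)"
  shows "(\<forall>s. (\<forall>i<lp s. lin A s (B s i) (\<lambda>(a,s'). w$s * u s a s') - b s i * w $ s \<le> 0) \<and>
          sqrt (\<Sum>j<lsc s. (lin A s (\<lambda>p. M s p j) (\<lambda>(a,s'). w$s * u s a s') + m s j * w $ s)\<^sup>2)
            \<le> lin A s (x s) (\<lambda>(a,s'). w$s * u s a s') + y s * w $ s)
    \<longleftrightarrow> in_U A lp B b lsc M m x y u"
  proof -
  have e1: "(lin A s (B s i) (\<lambda>(a,s'). w$s * u s a s') - b s i * w $ s \<le> 0) \<longleftrightarrow>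
     (lin A s (B s i) (\<lambda>(a,s'). u s a s') - b s i \<le> 0)" for s i
    by (rule poly_scale[OF assms])
  have e2: "(sqrt (\<Sum>j<lsc s. (lin A s (\<lambda>p. M s p j) (\<lambda>(a,s'). w$s * u s a s') + m s j * w $ s)\<^sup>2)
            \<le> lin A s (x s) (\<lambda>(a,s'). w$s * u s a s') + y s * w $ s) \<longleftrightarrow>
      (sqrt (\<Sum>j<lsc s. (lin A s (\<lambda>p. M s p j) (\<lambda>(a,s'). u s a s') + m s j)\<^sup>2)
            \<le> lin A s (x s) (\<lambda>(a,s'). u s a s') + y s)" for s
    by (rule soc_scale[OF assms])
  show ?thesis unfolding in_U_def e1 e2 ..
qed

theorem mainTheorem1:
  fixes A :: "'s::finite \<Rightarrow> 'act set"
    and \<alpha> :: real and \<gamma> :: "real^'s"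
    and pbar :: "'s \<Rightarrow> 'act \<Rightarrow> 's \<Rightarrow> real"
    and lp :: "'s \<Rightarrow> nat" and B :: "'s \<Rightarrow> nat \<Rightarrow> 'act \<times> 's \<Rightarrow> real" and b :: "'s \<Rightarrow> nat \<Rightarrow> real"
    and lsc :: "'s \<Rightarrow> nat" and M :: "'s \<Rightarrow> 'act \<times> 's \<Rightarrow> nat \<Rightarrow> real" and m :: "'s \<Rightarrow> nat \<Rightarrow> real"
    and x :: "'s \<Rightarrow> 'act \<times> 's \<Rightarrow> real" and y :: "'s \<Rightarrow> real"
    and f :: "'s \<Rightarrow> 'act \<Rightarrow> real" and c :: "'s \<Rightarrow> 'act \<Rightarrow> real"
  assumes A_fin: "\<And>s. finite (A s)" and A_ne: "\<And>s. A s \<noteq> {}"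
    and alpha: "0 < \<alpha>" "\<alpha> < 1"
    and gamma_pos: "\<And>s. \<gamma> $ s > 0" and gamma_sum: "(\<Sum>s\<in>UNIV. \<gamma> $ s) = 1"
    and pbar_nonneg: "\<And>s a s'. a \<in> A s \<Longrightarrow> pbar s a s' \<ge> 0"
    and pbar_sum: "\<And>s a. a \<in> A s \<Longrightarrow> (\<Sum>s'\<in>UNIV. pbar s a s') = 1"
    and poly_incl: "\<And>s v. (\<forall>i<lp s. lin A s (B s i) v - b s i \<le> 0) \<Longrightarrow>
        (\<forall>a\<in>A s. (\<Sum>s'\<in>UNIV. v (a, s')) = 0) \<and> (\<forall>a\<in>A s. \<forall>s'. pbar s a s' + v (a, s') \<ge> 0)"
    and f_nonneg: "\<And>s a. a \<in> A s \<Longrightarrow> f s a \<ge> 0"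
    and f_sum: "\<And>s. (\<Sum>a\<in>A s. f s a) = 1"
  shows "(\<forall>u. in_U A lp B b lsc M m x y u \<longrightarrow>
            (\<exists>w z. feasII A \<alpha> \<gamma> f pbar lp B b lsc M m x y w z \<and> objII A f c w = objI A \<alpha> \<gamma> f pbar c u))
       \<and> (\<forall>w z. feasII A \<alpha> \<gamma> f pbar lp B b lsc M m x y w z \<longrightarrow>
            (\<exists>u. in_U A lp B b lsc M m x y u \<and> objI A \<alpha> \<gamma> f pbar c u = objII A f c w))
       \<and> {objI A \<alpha> \<gamma> f pbar c u | u. in_U A lp B b lsc M m x y u}
         = {objII A f c w | w z. feasII A \<alpha> \<gamma> f pbar lp B b lsc M m x y w z}"
proof -
  let ?g = "(1 - \<alpha>) *\<^sub>R \<gamma>"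
  let ?P0 = "Pf A f pbar (\<lambda>_ _ _. 0)"
  have stochU: "stoch (Pf A f pbar u) \<alpha>" if uU: "in_U A lp B b lsc M m x y u" for u
  proof -
    have pi: "(\<forall>a\<in>A s. (\<Sum>s'\<in>UNIV. u s a s') = 0) \<and> (\<forall>a\<in>A s. \<forall>s'. pbar s a s' + u s a s' \<ge> 0)" for s
    proof -
      from uU have "\<forall>i<lp s. lin A s (B s i) (\<lambda>(a,s'). u s a s') - b s i \<le> 0"
        unfolding in_U_def by blast
      from poly_incl[OF this] show ?thesis by simp
    qed
    have nn: "Pf A f pbar u $ s $ t \<ge> 0" for s t
      unfolding Pf_def using pi f_nonneg by (auto intro!: sum_nonneg)
    have rows: "(\<Sum>t\<in>UNIV. Pf A f pbar u $ s $ t) = 1" for s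
    proof -
      have "(\<Sum>t\<in>UNIV. Pf A f pbar u $ s $ t) = (\<Sum>a\<in>A s. f s a * ((\<Sum>t\<in>UNIV. pbar s a t) + (\<Sum>t\<in>UNIV. u s a t)))"
      proof -
        have "(\<Sum>t\<in>UNIV. Pf A f pbar u $ s $ t) = (\<Sum>t\<in>UNIV. \<Sum>a\<in>A s. f s a * (pbar s a t + u s a t))"
          by (simp add: Pf_def)
        also have "\<dots> = (\<Sum>a\<in>A s. \<Sum>t\<in>UNIV. f s a * (pbar s a t + u s a t))"
          by (rule sum.swap)
        also have "\<dots> = (\<Sum>a\<in>A s. f s a * ((\<Sum>t\<in>UNIV. pbar s a t) + (\<Sum>t\<in>UNIV. u s a t)))"
          by (rule sum.cong[OF refl]) (simp only: sum_distrib_left[symmetric] sum.distrib)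
        finally show ?thesis .
      qed
      also have "\<dots> = (\<Sum>a\<in>A s. f s a)"
        by (rule sum.cong) (use pi pbar_sum in auto)
      finally show ?thesis using f_sum by simp
    qed
    show ?thesis unfolding stoch_def using nn rows alpha by blast
  qed
  have part1: "\<exists>w z. feasII A \<alpha> \<gamma> f pbar lp B b lsc M m x y w z \<and> objII A f c w = objI A \<alpha> \<gamma> f pbar c u"
    if uU: "in_U A lp B b lsc M m x y u" for u
  proof -
    interpret st: stoch "Pf A f pbar u" \<alpha> using stochU[OF uU] .
    define Mt where "Mt = mat 1 - \<alpha> *\<^sub>R Pf A f pbar u"
    define w where "w = ?g v* matrix_inv Mt"
    have wM: "w v* Mt = ?g"
      by (simp add: w_def vector_matrix_mul_assoc st.inv_eqs Mt_def)
    have wnn: "w$t \<ge> 0" for t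
    proof -
      have "w$t = w \<bullet> axis t 1" by (rule cart_eq_inner_axis)
      also have "\<dots> = ?g \<bullet> (matrix_inv Mt *v axis t 1)"
        unfolding w_def by (rule dot_lmul_matrix)
      also have "\<dots> \<ge> 0" unfolding inner_vec_def
        using gamma_pos alpha st.inv_pos[of "axis t 1"]
        by (intro sum_nonneg) (auto simp: Mt_def axis_def less_imp_le)
      finally show ?thesis .
    qed
    have wge: "w$t \<ge> (1 - \<alpha>) * \<gamma>$t" for t
    proof -
      have "(w v* Mt)$t = w$t - \<alpha> * (\<Sum>s\<in>UNIV. w$s * Pf A f pbar u$s$t)"
        unfolding Mt_def by (rule vm_gen)
      moreover have "(\<Sum>s\<in>UNIV. w$s * Pf A f pbar u$s$t) \<ge> 0"
        using wnn st.nn by (intro sum_nonneg) simp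
      ultimately show ?thesis using wM alpha by (simp add: mult_nonneg_nonneg)
    qed
    have wpos: "w$t > 0" for t
    proof -
      have "(1 - \<alpha>) * \<gamma>$t > 0" using gamma_pos[of t] alpha by simp
      then show ?thesis using wge[of t] by linarith
    qed
    define z where "z = (\<lambda>s a s'. w$s * u s a s')"
    have "feasII A \<alpha> \<gamma> f pbar lp B b lsc M m x y w z"
    proof -
      have c1: "\<forall>s. (\<forall>i<lp s. lin A s (B s i) (\<lambda>(a,s'). z s a s') - b s i * w $ s \<le> 0) \<and>
          sqrt (\<Sum>j<lsc s. (lin A s (\<lambda>p. M s p j) (\<lambda>(a,s'). z s a s') + m s j * w $ s)\<^sup>2)
            \<le> lin A s (x s) (\<lambda>(a,s'). z s a s') + y s * w $ s"
        unfolding z_def using constr_iff[OF wpos] uU by blast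
      have c3: "w $ s' - \<alpha> * (\<Sum>s\<in>UNIV. w $ s * ?P0 $ s $ s')
            - \<alpha> * (\<Sum>s\<in>UNIV. \<Sum>a\<in>A s. f s a * z s a s') = (1 - \<alpha>) * \<gamma> $ s'" for s'
        using eqn[of w \<alpha> A f pbar u s'] wM unfolding z_def Mt_def by simp
      show ?thesis unfolding feasII_def using c1 c3 wge by blast
    qed
    moreover have "objII A f c w = objI A \<alpha> \<gamma> f pbar c u"
      unfolding objII_def objI_def w_def Mt_def by (simp add: dot_lmul_matrix)
    ultimately show ?thesis by blast
  qed
  have part2: "\<exists>u. in_U A lp B b lsc M m x y u \<and> objI A \<alpha> \<gamma> f pbar c u = objII A f c w"
    if fz: "feasII A \<alpha> \<gamma> f pbar lp B b lsc M m x y w z" for w z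
  proof -
    have wge: "w$t \<ge> (1 - \<alpha>) * \<gamma>$t" for t using fz unfolding feasII_def by blast
    have wpos: "w$t > 0" for t
    proof -
      have "(1 - \<alpha>) * \<gamma>$t > 0" using gamma_pos[of t] alpha by simp
      then show ?thesis using wge[of t] by linarith
    qed
    define u where "u = (\<lambda>s a s'. z s a s' / w$s)"
    have zeq: "z = (\<lambda>s a s'. w$s * u s a s')"
      unfolding u_def using wpos by (simp add: fun_eq_iff less_imp_neq[symmetric])
    have uU: "in_U A lp B b lsc M m x y u"
      using fz unfolding feasII_def zeq using constr_iff[OF wpos] by blast
    interpret st: stoch "Pf A f pbar u" \<alpha> using stochU[OF uU] .
    define Mt where "Mt = mat 1 - \<alpha> *\<^sub>R Pf A f pbar u"
    have wM: "w v* Mt = ?g"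
    proof -
      have "(w v* Mt)$t = ?g$t" for t
        using eqn[of w \<alpha> A f pbar u t] fz unfolding Mt_def feasII_def zeq by simp
      then show ?thesis by (simp add: vec_eq_iff)
    qed
    have "w = w v* (Mt ** matrix_inv Mt)" by (simp add: Mt_def st.inv_eqs)
    also have "\<dots> = ?g v* matrix_inv Mt" by (simp add: vector_matrix_mul_assoc[symmetric] wM)
    finally have weq: "w = ?g v* matrix_inv Mt" .
    have "objI A \<alpha> \<gamma> f pbar c u = objII A f c w"
      unfolding objII_def objI_def weq Mt_def by (simp add: dot_lmul_matrix)
    with uU show ?thesis by blast
  qed
  have part3: "{objI A \<alpha> \<gamma> f pbar c u | u. in_U A lp B b lsc M m x y u}
         = {objII A f c w | w z. feasII A \<alpha> \<gamma> f pbar lp B b lsc M m x y w z}"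
  proof (intro equalityI subsetI)
    fix v assume "v \<in> {objI A \<alpha> \<gamma> f pbar c u | u. in_U A lp B b lsc M m x y u}"
    then obtain u where "in_U A lp B b lsc M m x y u" "v = objI A \<alpha> \<gamma> f pbar c u" by blast
    from part1[OF this(1)] obtain w z where "feasII A \<alpha> \<gamma> f pbar lp B b lsc M m x y w z"
        "objII A f c w = objI A \<alpha> \<gamma> f pbar c u" by blast
    with \<open>v = objI A \<alpha> \<gamma> f pbar c u\<close>
    show "v \<in> {objII A f c w | w z. feasII A \<alpha> \<gamma> f pbar lp B b lsc M m x y w z}"
      unfolding mem_Collect_eq by (intro exI conjI) simp_all
  next
    fix v assume "v \<in> {objII A f c w | w z. feasII A \<alpha> \<gamma> f pbar lp B b lsc M m x y w z}"
    then obtain w z where "feasII A \<alpha> \<gamma> f pbar lp B b lsc M m x y w z" "v = objII A f c w" by blast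
    from part2[OF this(1)] obtain u where "in_U A lp B b lsc M m x y u"
        "objI A \<alpha> \<gamma> f pbar c u = objII A f c w" by blast
    with \<open>v = objII A f c w\<close>
    show "v \<in> {objI A \<alpha> \<gamma> f pbar c u | u. in_U A lp B b lsc M m x y u}"
      unfolding mem_Collect_eq by (intro exI conjI) simp_all
  qed
  show ?thesis using part1 part2 part3 by blast
qed

end
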